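(* Let $\mathcal{A}$ and $\mathcal{B}$ be sharp qubit observables, with a priori probabilities $\eta$ for $\mathcal{A}$ and $1-\eta$ for $\mathcal{B}$, where $\eta\in[0,1]$, and let $P\in[0,1]$. The following are equivalent: (i) there is a unit vector $\psi\in\mathbb{C}^2\otimes\mathbb{C}^2$ such that $\langle\psi|\mathcal{B}_1\otimes\mathcal{B}_1+\mathcal{B}_2\otimes\mathcal{B}_2|\psi\rangle=0$ and $\eta\langle\psi|\mathcal{A}_1\otimes\mathcal{A}_1+\mathcal{A}_2\otimes\mathcal{A}_2|\psi\rangle=P$ (i.e. the result "same outcomes" leads to the conclusion that the apparatus is $\mathcal{A}$, with success probability $P$); (ii) there is a unit vector $\psi'\in\mathbb{C}^2\otimes\mathbb{C}^2$ such that $\langle\psi'|\mathcal{B}_1\otimes\mathcal{B}_2+\mathcal{B}_2\otimes\mathcal{B}_1|\psi'\rangle=0$ and $\eta\langle\psi'|\mathcal{A}_1\otimes\mathcal{A}_2+\mathcal{A}_2\otimes\mathcal{A}_1|\psi'\rangle=P$ (i.e. the result "different outcomes" leads to the conclusion that the apparatus is $\mathcal{A}$, with success probability $P$).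
   Context: A sharp qubit observable is given by a unit vector $\vec a\in\mathbb{R}^3$ and has two outcomes with effects $\mathcal{A}_1=\frac12(I+\vec a\cdot\vec\sigma)$, $\mathcal{A}_2=\frac12(I-\vec a\cdot\vec\sigma)$ on $\mathbb{C}^2$, where $\vec\sigma=(\sigma_x,\sigma_y,\sigma_z)$ are the Pauli matrices; similarly $\mathcal{B}_{1,2}=\frac12(I\pm\vec b\cdot\vec\sigma)$ with $\vec b$ a unit vector. In a two-shot experiment, the unknown apparatus (either $\mathcal{A}$ or $\mathcal{B}$, labels of outcomes unknown) is applied to each half of a probe state on $\mathbb{C}^2\otimes\mathbb{C}^2$, and one only observes whether the two outcomes are the same or different. *)

theory Defs
  imports "HOL-Analysis.Analysis"
begin

text \<open>Qubit space C^2 is complex^2 (index type 2 with elements 0,1);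
  the two-qubit space C^2 \<otimes> C^2 is complex^(2 \<times> 2).\<close>

type_synonym qmat = "complex^2^2"
type_synonym qqvec = "complex^(2 \<times> 2)"
type_synonym qqmat = "complex^(2 \<times> 2)^(2 \<times> 2)"

definition sigma_x :: qmat where
  "sigma_x = (\<chi> i j. if i \<noteq> j then 1 else 0)"

definition sigma_y :: qmat where
  "sigma_y = (\<chi> i j. if i = 0 \<and> j = 1 then - \<i> else if i = 1 \<and> j = 0 then \<i> else 0)"

definition sigma_z :: qmat where
  "sigma_z = (\<chi> i j. if i = j then (if i = 0 then 1 else -1) else 0)"

definition dot_sigma :: "real^3 \<Rightarrow> qmat" where
  "dot_sigma a = a$1 *\<^sub>R sigma_x + a$2 *\<^sub>R sigma_y + a$3 *\<^sub>R sigma_z"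

text \<open>Effects of the sharp observable given by unit vector a: outcome 1 and outcome 2.\<close>
definition eff1 :: "real^3 \<Rightarrow> qmat" where
  "eff1 a = (1/2 :: real) *\<^sub>R (mat 1 + dot_sigma a)"

definition eff2 :: "real^3 \<Rightarrow> qmat" where
  "eff2 a = (1/2 :: real) *\<^sub>R (mat 1 - dot_sigma a)"

definition tens :: "qmat \<Rightarrow> qmat \<Rightarrow> qqmat" where
  "tens A B = (\<chi> p q. A $ fst p $ fst q * B $ snd p $ snd q)"

definition expval :: "qqmat \<Rightarrow> qqvec \<Rightarrow> complex" where
  "expval M \<psi> = (\<Sum>i\<in>UNIV. cnj (\<psi> $ i) * (M *v \<psi>) $ i)"

end

theory Submission imports Defs begin
lemma two2: "(2::2) = 0" by simp
lemma ex2: "(x::2) = 0 \<or> x = 1" using exhaust_2[of x] two2 by metis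
lemma UNIV2': "(UNIV::2 set) = {0,1}" using ex2 by auto
lemma sum2': "sum f (UNIV::2 set) = f 0 + f 1" by (simp add: UNIV2')
lemma ds_entries: "dot_sigma a $ 0 $ 0 = complex_of_real (a$3)"
  "dot_sigma a $ 0 $ 1 = complex_of_real (a$1) - \<i> * complex_of_real (a$2)"
  "dot_sigma a $ 1 $ 0 = complex_of_real (a$1) + \<i> * complex_of_real (a$2)"
  "dot_sigma a $ 1 $ 1 = - complex_of_real (a$3)"
  by (simp_all add: dot_sigma_def sigma_x_def sigma_y_def sigma_z_def; simp add: scaleR_conv_of_real)+
lemma mateq2: "(A::qmat) = B \<longleftrightarrow> A$0$0 = B$0$0 \<and> A$0$1 = B$0$1 \<and> A$1$0 = B$1$0 \<and> A$1$1 = B$1$1"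
proof
  assume h: "A$0$0 = B$0$0 \<and> A$0$1 = B$0$1 \<and> A$1$0 = B$1$0 \<and> A$1$1 = B$1$1"
  show "A = B" unfolding vec_eq_iff
  proof (intro allI)
    fix i j :: 2 show "A$i$j = B$i$j" using ex2[of i] ex2[of j] h by auto
  qed
qed simp
lemma mm2: "((A::qmat) ** B) $ i $ j = A$i$0 * B$0$j + A$i$1 * B$1$j"
  by (simp add: matrix_matrix_mult_def sum2')

lemma inner3: "inner (a::real^3) b = a$1*b$1 + a$2*b$2 + a$3*b$3"
  by (simp add: inner_vec_def sum_3)

lemma ds_sq: assumes "norm n = 1" shows "dot_sigma n ** dot_sigma n = mat 1"
proof -
  have h: "n$1*n$1 + n$2*n$2 + n$3*n$3 = 1" using assms inner3[of n n]
    by (metis norm_eq_1)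
  show ?thesis unfolding mateq2 mm2 ds_entries
    by (simp add: mat_def complex_eq_iff algebra_simps power2_eq_square) (use h in argo)
qed

lemma ds_anti: assumes "inner n a = 0" shows "dot_sigma n ** dot_sigma a + dot_sigma a ** dot_sigma n = 0"
proof -
  have h: "n$1*a$1 + n$2*a$2 + n$3*a$3 = 0" using assms inner3[of n a] by simp
  show ?thesis unfolding mateq2 mm2 ds_entries vector_add_component zero_index
    apply (simp add: complex_eq_iff algebra_simps)
    using h by (auto simp: algebra_simps)
qed
lemma mm_scaleR_r: "(A::qmat) ** (k *\<^sub>R (B::qmat)) = k *\<^sub>R (A ** B)"
  by (subst mateq2) (simp add: mm2 algebra_simps)
lemma mm_scaleR_l: "(k *\<^sub>R (A::qmat)) ** (B::qmat) = k *\<^sub>R (A ** B)"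
  by (subst mateq2) (simp add: mm2 algebra_simps)
lemma mm_add_r: "((A::qmat) + B) ** (C::qmat) = A ** C + B ** C"
  by (subst mateq2) (simp add: mm2 algebra_simps)
lemma mm_diff_l: "(A::qmat) ** (B - (C::qmat)) = A ** B - A ** C"
  by (subst mateq2) (simp add: mm2 algebra_simps)
lemma mm_diff_r: "((A::qmat) - B) ** (C::qmat) = A ** C - B ** C"
  by (subst mateq2) (simp add: mm2 algebra_simps)

lemma ds_conj: assumes "norm n = 1" "inner n a = 0"
  shows "dot_sigma n ** dot_sigma a ** dot_sigma n = - dot_sigma a"
proof -
  have "dot_sigma a ** dot_sigma n = - (dot_sigma n ** dot_sigma a)"
    using ds_anti[OF assms(2)] by (simp add: eq_neg_iff_add_eq_0 add.commute)
  hence "dot_sigma n ** dot_sigma a ** dot_sigma n = dot_sigma n ** (- (dot_sigma n ** dot_sigma a))"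
    by (simp add: matrix_mul_assoc[symmetric])
  also have "\<dots> = - (dot_sigma n ** dot_sigma n ** dot_sigma a)"
    using mm_diff_l[of "dot_sigma n" 0 "dot_sigma n ** dot_sigma a"] by (simp add: matrix_mul_assoc)
  finally show ?thesis using ds_sq[OF assms(1)] by simp
qed

lemma eff_swap: assumes "norm n = 1" "inner n a = 0"
  shows "dot_sigma n ** eff1 a ** dot_sigma n = eff2 a"
        "dot_sigma n ** eff2 a ** dot_sigma n = eff1 a"
  unfolding eff1_def eff2_def mm_scaleR_r mm_scaleR_l matrix_add_ldistrib mm_add_r
     mm_diff_l mm_diff_r ds_conj[OF assms] matrix_mul_rid ds_sq[OF assms(1)]
  by simp_all
definition ctr :: "qqmat \<Rightarrow> qqmat" where "ctr W = (\<chi> i j. cnj (W $ j $ i))"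

lemma sum_cnj_mv: "(\<Sum>i\<in>UNIV. cnj ((W *v x) $ i) * y $ i) = (\<Sum>k\<in>UNIV. cnj (x $ k) * (ctr W *v y) $ k)"
proof -
  have "(\<Sum>i\<in>UNIV. cnj ((W *v x) $ i) * y $ i) = (\<Sum>i\<in>UNIV. \<Sum>k\<in>UNIV. cnj (W$i$k) * cnj (x$k) * y$i)"
    by (simp add: matrix_vector_mult_def sum_distrib_right)
  also have "\<dots> = (\<Sum>k\<in>UNIV. \<Sum>i\<in>UNIV. cnj (x$k) * (cnj (W$i$k) * y$i))"
    by (subst sum.swap) (simp add: mult_ac)
  also have "\<dots> = (\<Sum>k\<in>UNIV. cnj (x $ k) * (ctr W *v y) $ k)"
    by (simp add: matrix_vector_mult_def ctr_def sum_distrib_left)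
  finally show ?thesis .
qed

lemma expval_tr: "expval M (W *v \<psi>) = expval (ctr W ** M ** W) \<psi>"
  unfolding expval_def sum_cnj_mv by (simp add: matrix_vector_mul_assoc matrix_mul_assoc)

lemma UNIV22: "(UNIV::(2\<times>2) set) = {(0,0),(0,1),(1,0),(1,1)}"
  using ex2 by auto
lemma sum22: "sum f (UNIV::(2\<times>2) set) = f (0,0) + f (0,1) + f (1,0) + f (1,1)"
  by (simp add: UNIV22 add.assoc)

lemma tens_mult: "tens A B ** tens C D = tens (A ** C) (B ** D)"
  unfolding vec_eq_iff by (simp add: matrix_matrix_mult_def tens_def sum22 sum2' algebra_simps)

lemma tens_add_r: "tens A (B + C) = tens A B + tens A C"
  unfolding vec_eq_iff by (simp add: tens_def algebra_simps)

lemma qq_add_r: "((A::qqmat) + B) ** (C::qqmat) = A ** C + B ** C"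
  unfolding vec_eq_iff by (simp add: matrix_matrix_mult_def algebra_simps sum.distrib)

lemma ds_herm: "cnj (dot_sigma n $ j $ i) = dot_sigma n $ i $ j"
  using ex2[of i] ex2[of j] by (auto simp: ds_entries)

lemma tens_mat1: "tens (mat 1) (mat 1) = mat 1"
  unfolding vec_eq_iff by (simp add: tens_def mat_def prod_eq_iff)

definition WW :: "real^3 \<Rightarrow> qqmat" where "WW n = tens (mat 1) (dot_sigma n)"

lemma ctr_WW: "ctr (WW n) = WW n"
  unfolding vec_eq_iff WW_def ctr_def tens_def by (simp add: ds_herm mat_def)

lemma WW_sq: "norm n = 1 \<Longrightarrow> WW n ** WW n = mat 1"
  unfolding WW_def tens_mult by (simp add: ds_sq tens_mat1)

lemma WW_conj: "WW n ** tens X Y ** WW n = tens X (dot_sigma n ** Y ** dot_sigma n)"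
  unfolding WW_def tens_mult by simp

lemma expval_same_diff:
  assumes "norm n = 1" "inner n a = 0"
  shows "expval (tens (eff1 a) (eff1 a) + tens (eff2 a) (eff2 a)) (WW n *v \<psi>)
       = expval (tens (eff1 a) (eff2 a) + tens (eff2 a) (eff1 a)) \<psi>"
    "expval (tens (eff1 a) (eff2 a) + tens (eff2 a) (eff1 a)) (WW n *v \<psi>)
       = expval (tens (eff1 a) (eff1 a) + tens (eff2 a) (eff2 a)) \<psi>"
  unfolding expval_tr ctr_WW matrix_add_ldistrib qq_add_r WW_conj eff_swap[OF assms]
  by simp_all

lemma norm_sq_vec: "complex_of_real ((norm (x::qqvec))^2) = (\<Sum>i\<in>UNIV. cnj (x$i) * x$i)"
proof -
  have "(norm x)^2 = (\<Sum>i\<in>UNIV. (norm (x$i))^2)"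
    unfolding norm_vec_def L2_set_def by (simp add: sum_nonneg)
  hence "complex_of_real ((norm x)^2) = (\<Sum>i\<in>UNIV. complex_of_real ((norm (x$i))^2))"
    by (simp only: of_real_sum)
  also have "\<dots> = (\<Sum>i\<in>UNIV. cnj (x$i) * x$i)"
    by (intro sum.cong refl) (metis complex_norm_square mult.commute)
  finally show ?thesis .
qed

lemma norm_WW: assumes "norm n = 1" shows "norm (WW n *v \<psi>) = norm \<psi>"
proof -
  have "complex_of_real ((norm (WW n *v \<psi>))^2) = complex_of_real ((norm \<psi>)^2)"
    unfolding norm_sq_vec sum_cnj_mv ctr_WW
    by (simp add: matrix_vector_mul_assoc WW_sq[OF assms])
  hence "(norm (WW n *v \<psi>))^2 = (norm \<psi>)^2" using of_real_eq_iff by blast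
  thus ?thesis by (simp add: power2_eq_iff_nonneg)
qed

lemma exists_n: fixes a b :: "real^3" obtains n where "norm n = 1" "inner n a = 0" "inner n b = 0"
proof -
  have "dim {a,b} \<le> card {a,b}" by (rule dim_le_card') simp
  also have "\<dots> \<le> 2" by (simp add: card_insert_le_m1)
  finally have "dim {a,b} < DIM(real^3)" by simp
  then obtain x where x: "x \<noteq> 0" "\<And>y. y \<in> span {a,b} \<Longrightarrow> orthogonal x y"
    using orthogonal_to_subspace_exists by blast
  have "orthogonal x a" "orthogonal x b" by (simp_all add: x(2) span_base)
  hence "norm (x /\<^sub>R norm x) = 1" "inner (x /\<^sub>R norm x) a = 0" "inner (x /\<^sub>R norm x) b = 0"
    using x(1) by (auto simp: orthogonal_def)
  thus ?thesis using that by blast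
qed
theorem proposition4:
  fixes a b :: "real^3" and \<eta> P :: real
  assumes "norm a = 1" and "norm b = 1"
    and "0 \<le> \<eta>" and "\<eta> \<le> 1" and "0 \<le> P" and "P \<le> 1"
  shows "(\<exists>\<psi> :: qqvec. norm \<psi> = 1
            \<and> expval (tens (eff1 b) (eff1 b) + tens (eff2 b) (eff2 b)) \<psi> = 0
            \<and> complex_of_real \<eta> * expval (tens (eff1 a) (eff1 a) + tens (eff2 a) (eff2 a)) \<psi>
                = complex_of_real P)
     \<longleftrightarrow>
         (\<exists>\<psi>' :: qqvec. norm \<psi>' = 1
            \<and> expval (tens (eff1 b) (eff2 b) + tens (eff2 b) (eff1 b)) \<psi>' = 0
            \<and> complex_of_real \<eta> * expval (tens (eff1 a) (eff2 a) + tens (eff2 a) (eff1 a)) \<psi>'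
                = complex_of_real P)"
proof -
  obtain n where n: "norm n = 1" "inner n a = 0" "inner n b = 0" using exists_n by blast
  note sa = expval_same_diff[OF n(1) n(2)] and sb = expval_same_diff[OF n(1) n(3)]
  show ?thesis
  proof
    assume "\<exists>\<psi> :: qqvec. norm \<psi> = 1
            \<and> expval (tens (eff1 b) (eff1 b) + tens (eff2 b) (eff2 b)) \<psi> = 0
            \<and> complex_of_real \<eta> * expval (tens (eff1 a) (eff1 a) + tens (eff2 a) (eff2 a)) \<psi>
                = complex_of_real P"
    then obtain \<psi> :: qqvec where h: "norm \<psi> = 1"
       "expval (tens (eff1 b) (eff1 b) + tens (eff2 b) (eff2 b)) \<psi> = 0"
       "complex_of_real \<eta> * expval (tens (eff1 a) (eff1 a) + tens (eff2 a) (eff2 a)) \<psi>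
                = complex_of_real P" by blast
    show "\<exists>\<psi>' :: qqvec. norm \<psi>' = 1
            \<and> expval (tens (eff1 b) (eff2 b) + tens (eff2 b) (eff1 b)) \<psi>' = 0
            \<and> complex_of_real \<eta> * expval (tens (eff1 a) (eff2 a) + tens (eff2 a) (eff1 a)) \<psi>'
                = complex_of_real P"
      by (rule exI[of _ "WW n *v \<psi>"]) (simp add: norm_WW[OF n(1)] h sa sb)
  next
    assume "\<exists>\<psi> :: qqvec. norm \<psi> = 1
            \<and> expval (tens (eff1 b) (eff2 b) + tens (eff2 b) (eff1 b)) \<psi> = 0
            \<and> complex_of_real \<eta> * expval (tens (eff1 a) (eff2 a) + tens (eff2 a) (eff1 a)) \<psi>
                = complex_of_real P"
    then obtain \<psi> :: qqvec where h: "norm \<psi> = 1"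
       "expval (tens (eff1 b) (eff2 b) + tens (eff2 b) (eff1 b)) \<psi> = 0"
       "complex_of_real \<eta> * expval (tens (eff1 a) (eff2 a) + tens (eff2 a) (eff1 a)) \<psi>
                = complex_of_real P" by blast
    show "\<exists>\<psi>' :: qqvec. norm \<psi>' = 1
            \<and> expval (tens (eff1 b) (eff1 b) + tens (eff2 b) (eff2 b)) \<psi>' = 0
            \<and> complex_of_real \<eta> * expval (tens (eff1 a) (eff1 a) + tens (eff2 a) (eff2 a)) \<psi>'
                = complex_of_real P"
      by (rule exI[of _ "WW n *v \<psi>"]) (simp add: norm_WW[OF n(1)] h sa sb)
  qed
qed

end
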